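(* Let $\Sigma\subseteq\mathcal L_\Diamond$ be finite and closed under subformulas and let $\mathcal I$ be a finite weak $\Sigma$-quasimodel such that for every deterministic weak $\mathcal L_\Diamond$-quasimodel $\mathcal A$ the relation $\rightharpoonup\ \subseteq|\mathcal I|\times|\mathcal A|$ is a surjective dynamic simulation. Let $P=\{w\in|\mathcal I|:\ \not\vdash\mathrm{Sim}(w)\}$ be the set of possible moments. Then $P$ is upward closed in $(|\mathcal I|,\preccurlyeq_{\mathcal I})$, and $S_{\mathcal I}\cap(P\times P)$ is serial on $P$: for every $w\in P$ there is $v\in P$ with $w\,S_{\mathcal I}\,v$.
   Context: $\mathcal L_\Diamond$ is the propositional language with $\bot,\wedge,\vee,\to$ and unary modalities $\bigcirc$, $\Diamond$. ${\sf ITL}^0_\Diamond$ is axiomatized by all intuitionistic propositional tautologies, $\neg\bigcirc\bot$, $\bigcirc\varphi\wedge\bigcirc\psi\to\bigcirc(\varphi\wedge\psi)$, $\bigcirc(\varphi\vee\psi)\to\bigcirc\varphi\vee\bigcirc\psi$, $\bigcirc(\varphi\to\psi)\to(\bigcirc\varphi\to\bigcirc\psi)$, $\varphi\vee\bigcirc\Diamond\varphi\to\Diamond\varphi$, closed under modus ponens and the rules $\varphi/\bigcirc\varphi$, $(\varphi\to\psi)/(\Diamond\varphi\to\Diamond\psi)$, $(\bigcirc\varphi\to\varphi)/(\Diamond\varphi\to\varphi)$; $\vdash\varphi$ means $\varphi\in{\sf ITL}^0_\Diamond$. Types: a $\Sigma$-type is a pair $\Phi=(\Phi^-;\Phi^+)$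 of subsets of $\Sigma$ with $\Phi^-\cap\Phi^+=\varnothing$, $\Phi^-\cup\Phi^+=\Sigma$, $\bot\notin\Phi^+$, $\wedge,\vee$ in $\Phi^+$ behaving classically, ($\varphi\to\psi\in\Phi^+\Rightarrow\varphi\in\Phi^-$ or $\psi\in\Phi^+$), ($\Diamond\varphi\in\Phi^-\Rightarrow\varphi\in\Phi^-$). $\Phi\preccurlyeq_T\Psi$ iff $\Phi^+\subseteq\Psi^+$; $\Phi\subseteq_T\Psi$ iff $\Phi^-\subseteq\Psi^-$, $\Phi^+\subseteq\Psi^+$. $\Phi\,S_T\,\Psi$ iff: $\bigcirc\varphi\in\Phi^+\Rightarrow\varphi\in\Psi^+$; $\bigcirc\varphi\in\Phi^-\Rightarrow\varphi\in\Psi^-$; ($\Diamond\varphi\in\Phi^+$, $\varphi\in\Phi^-$)$\Rightarrow\Diamond\varphi\in\Psi^+$; $\Diamond\varphi\in\Phi^-\Rightarrow\Diamond\varphi\in\Psi^-$. A $\Sigma$-labelled frame is $(W,\preccurlyeq,\ell)$, $\preccurlyeq$ a partial order, $\ell$ mapping to $\Sigma$-types, monotone w.r.t. $\preccurlyeq_T$, and if $\varphi\to\psi\in\ell^-(w)$ then some $v\succcurlyeq w$ has $\varphi\in\ell^+(v)$, $\psi\in\ell^-(v)$. A weak $\Sigma$-quasimodel adds $S\subseteq W\times W$ forward-confluent (if $w\preccurlyeq w'$, $w\,S\,v$ then some $v'\succcurlyeq v$ has $w'\,S\,v'$) and sensible ($w\,S\,v\Rightarrow\ell(w)\,S_T\,\ell(v)$);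 deterministic if $S$ is a function. A simulation from a $\Sigma$-labelled $\mathcal X$ to a $\Delta$-labelled $\mathcal Y$ ($\Sigma\subseteq\Delta$) is a forward-confluent $E\subseteq|\mathcal X|\times|\mathcal Y|$ (if $x\,E\,y$, $x\preccurlyeq x'$ then some $y'\succcurlyeq y$ has $x'\,E\,y'$) with $x\,E\,y\Rightarrow\ell(x)\subseteq_T\ell(y)$; $x\rightharpoonup y$ iff some simulation relates them; $E$ is dynamic if $x\,E\,y$ and $y\,S\,y'$ imply some $x'$ with $x\,S\,x'$, $x'\,E\,y'$; surjective if every point of $\mathcal A$ is in its range. $\mathrm{Sim}(w)$ for $w$ in a finite $\Sigma$-labelled frame is defined by backwards induction on $\prec$: $\mathrm{Sim}(w)=\bigwedge\ell^+(w)\to\big(\bigvee\ell^-(w)\vee\bigvee_{v\succ w}\mathrm{Sim}(v)\big)$ ($\bigwedge\varnothing=\top$, $\bigvee\varnothing=\bot$). *)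

theory Defs
  imports Main
begin

datatype fm = Var nat | Bot | And fm fm | Or fm fm | Imp fm fm | Nxt fm | Dia fm

definition Top :: fm where "Top = Imp Bot Bot"

fun subfms :: "fm \<Rightarrow> fm set" where
  "subfms (Var p) = {Var p}"
| "subfms Bot = {Bot}"
| "subfms (And a b) = insert (And a b) (subfms a \<union> subfms b)"
| "subfms (Or a b) = insert (Or a b) (subfms a \<union> subfms b)"
| "subfms (Imp a b) = insert (Imp a b) (subfms a \<union> subfms b)"
| "subfms (Nxt a) = insert (Nxt a) (subfms a)"
| "subfms (Dia a) = insert (Dia a) (subfms a)"

definition subfm_closed :: "fm set \<Rightarrow> bool" where
  "subfm_closed \<Sigma> \<longleftrightarrow> (\<forall>\<phi>\<in>\<Sigma>. subfms \<phi> \<subseteq> \<Sigma>)"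

text \<open>Intuitionistic propositional tautologies are obtained as the closure under
modus ponens of all instances (over the whole language) of the standard Hilbert
axiom schemes of intuitionistic propositional logic.\<close>

inductive prv :: "fm \<Rightarrow> bool" where
  ipc1: "prv (Imp a (Imp b a))"
| ipc2: "prv (Imp (Imp a (Imp b c)) (Imp (Imp a b) (Imp a c)))"
| ipc3: "prv (Imp (And a b) a)"
| ipc4: "prv (Imp (And a b) b)"
| ipc5: "prv (Imp a (Imp b (And a b)))"
| ipc6: "prv (Imp a (Or a b))"
| ipc7: "prv (Imp b (Or a b))"
| ipc8: "prv (Imp (Imp a c) (Imp (Imp b c) (Imp (Or a b) c)))"
| ipc9: "prv (Imp Bot a)"
| nxt_bot: "prv (Imp (Nxt Bot) Bot)"
| nxt_and: "prv (Imp (And (Nxt a) (Nxt b)) (Nxt (And a b)))"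
| nxt_or: "prv (Imp (Nxt (Or a b)) (Or (Nxt a) (Nxt b)))"
| nxt_imp: "prv (Imp (Nxt (Imp a b)) (Imp (Nxt a) (Nxt b)))"
| dia_fix: "prv (Imp (Or a (Nxt (Dia a))) (Dia a))"
| mp: "prv (Imp a b) \<Longrightarrow> prv a \<Longrightarrow> prv b"
| nec: "prv a \<Longrightarrow> prv (Nxt a)"
| dia_mono: "prv (Imp a b) \<Longrightarrow> prv (Imp (Dia a) (Dia b))"
| dia_ind: "prv (Imp (Nxt a) a) \<Longrightarrow> prv (Imp (Dia a) a)"

text \<open>A type is a pair (Phi-minus, Phi-plus).\<close>
type_synonym tp = "fm set \<times> fm set"

definition is_type :: "fm set \<Rightarrow> tp \<Rightarrow> bool" where
  "is_type \<Sigma> \<Phi> \<longleftrightarrow>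
     fst \<Phi> \<inter> snd \<Phi> = {} \<and> fst \<Phi> \<union> snd \<Phi> = \<Sigma> \<and> Bot \<notin> snd \<Phi> \<and>
     (\<forall>a b. And a b \<in> \<Sigma> \<longrightarrow> (And a b \<in> snd \<Phi> \<longleftrightarrow> a \<in> snd \<Phi> \<and> b \<in> snd \<Phi>)) \<and>
     (\<forall>a b. Or a b \<in> \<Sigma> \<longrightarrow> (Or a b \<in> snd \<Phi> \<longleftrightarrow> a \<in> snd \<Phi> \<or> b \<in> snd \<Phi>)) \<and>
     (\<forall>a b. Imp a b \<in> snd \<Phi> \<longrightarrow> a \<in> fst \<Phi> \<or> b \<in> snd \<Phi>) \<and>
     (\<forall>a. Dia a \<in> fst \<Phi> \<longrightarrow> a \<in> fst \<Phi>)"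

definition type_le :: "tp \<Rightarrow> tp \<Rightarrow> bool" where
  "type_le \<Phi> \<Psi> \<longleftrightarrow> snd \<Phi> \<subseteq> snd \<Psi>"

definition type_sub :: "tp \<Rightarrow> tp \<Rightarrow> bool" where
  "type_sub \<Phi> \<Psi> \<longleftrightarrow> fst \<Phi> \<subseteq> fst \<Psi> \<and> snd \<Phi> \<subseteq> snd \<Psi>"

definition type_S :: "tp \<Rightarrow> tp \<Rightarrow> bool" where
  "type_S \<Phi> \<Psi> \<longleftrightarrow>
     (\<forall>a. Nxt a \<in> snd \<Phi> \<longrightarrow> a \<in> snd \<Psi>) \<and>
     (\<forall>a. Nxt a \<in> fst \<Phi> \<longrightarrow> a \<in> fst \<Psi>) \<and>
     (\<forall>a. Dia a \<in> snd \<Phi> \<and> a \<in> fst \<Phi> \<longrightarrow> Dia a \<in> snd \<Psi>) \<and>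
     (\<forall>a. Dia a \<in> fst \<Phi> \<longrightarrow> Dia a \<in> fst \<Psi>)"

record 'a kframe =
  carrier :: "'a set"
  le :: "'a \<Rightarrow> 'a \<Rightarrow> bool"
  lab :: "'a \<Rightarrow> tp"
  suc :: "'a \<Rightarrow> 'a \<Rightarrow> bool"

definition labelled_frame :: "fm set \<Rightarrow> 'a kframe \<Rightarrow> bool" where
  "labelled_frame \<Sigma> M \<longleftrightarrow>
     (\<forall>w\<in>carrier M. le M w w) \<and>
     (\<forall>u\<in>carrier M. \<forall>v\<in>carrier M. \<forall>w\<in>carrier M. le M u v \<and> le M v w \<longrightarrow> le M u w) \<and>
     (\<forall>u\<in>carrier M. \<forall>v\<in>carrier M. le M u v \<and> le M v u \<longrightarrow> u = v) \<and>
     (\<forall>u v. le M u v \<longrightarrow> u \<in> carrier M \<and> v \<in> carrier M) \<and>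
     (\<forall>w\<in>carrier M. is_type \<Sigma> (lab M w)) \<and>
     (\<forall>w\<in>carrier M. \<forall>v\<in>carrier M. le M w v \<longrightarrow> type_le (lab M w) (lab M v)) \<and>
     (\<forall>w\<in>carrier M. \<forall>a b. Imp a b \<in> fst (lab M w) \<longrightarrow>
        (\<exists>v\<in>carrier M. le M w v \<and> a \<in> snd (lab M v) \<and> b \<in> fst (lab M v)))"

definition weak_quasimodel :: "fm set \<Rightarrow> 'a kframe \<Rightarrow> bool" where
  "weak_quasimodel \<Sigma> M \<longleftrightarrow>
     labelled_frame \<Sigma> M \<and>
     (\<forall>w v. suc M w v \<longrightarrow> w \<in> carrier M \<and> v \<in> carrier M) \<and>
     (\<forall>w w' v. le M w w' \<and> suc M w v \<longrightarrow> (\<exists>v'. le M v v' \<and> suc M w' v')) \<and>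
     (\<forall>w v. suc M w v \<longrightarrow> type_S (lab M w) (lab M v))"

definition deterministic :: "'a kframe \<Rightarrow> bool" where
  "deterministic M \<longleftrightarrow> (\<forall>w\<in>carrier M. \<exists>!v. suc M w v)"

definition simulation :: "'a kframe \<Rightarrow> 'b kframe \<Rightarrow> ('a \<Rightarrow> 'b \<Rightarrow> bool) \<Rightarrow> bool" where
  "simulation X Y E \<longleftrightarrow>
     (\<forall>x y. E x y \<longrightarrow> x \<in> carrier X \<and> y \<in> carrier Y) \<and>
     (\<forall>x y x'. E x y \<and> le X x x' \<longrightarrow> (\<exists>y'. le Y y y' \<and> E x' y')) \<and>
     (\<forall>x y. E x y \<longrightarrow> type_sub (lab X x) (lab Y y))"

definition simulates :: "'a kframe \<Rightarrow> 'b kframe \<Rightarrow> 'a \<Rightarrow> 'b \<Rightarrow> bool" where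
  "simulates X Y x y \<longleftrightarrow> (\<exists>E. simulation X Y E \<and> E x y)"

definition dynamic_rel :: "'a kframe \<Rightarrow> 'b kframe \<Rightarrow> ('a \<Rightarrow> 'b \<Rightarrow> bool) \<Rightarrow> bool" where
  "dynamic_rel X Y E \<longleftrightarrow>
     (\<forall>x y y'. E x y \<and> suc Y y y' \<longrightarrow> (\<exists>x'. suc X x x' \<and> E x' y'))"

definition surjective_rel :: "'a kframe \<Rightarrow> 'b kframe \<Rightarrow> ('a \<Rightarrow> 'b \<Rightarrow> bool) \<Rightarrow> bool" where
  "surjective_rel X Y E \<longleftrightarrow> (\<forall>y\<in>carrier Y. \<exists>x\<in>carrier X. E x y)"

definition list_of :: "fm set \<Rightarrow> fm list" where
  "list_of S = (SOME xs. set xs = S \<and> distinct xs)"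

definition BigAnd :: "fm set \<Rightarrow> fm" where
  "BigAnd S = foldr And (list_of S) Top"

definition BigOr :: "fm set \<Rightarrow> fm" where
  "BigOr S = foldr Or (list_of S) Bot"

text \<open>Backwards induction on the strict order, implemented with fuel; with fuel
card W the recursion never runs out on a finite partial order.\<close>
primrec simf :: "nat \<Rightarrow> 'a kframe \<Rightarrow> 'a \<Rightarrow> fm" where
  "simf 0 M w = Bot"
| "simf (Suc n) M w =
     Imp (BigAnd (snd (lab M w)))
         (Or (BigOr (fst (lab M w)))
             (BigOr (simf n M ` {v \<in> carrier M. le M w v \<and> v \<noteq> w})))"

definition Sim :: "'a kframe \<Rightarrow> 'a \<Rightarrow> fm" where
  "Sim M w = simf (card (carrier M)) M w"

end

theory Submission
  imports Defs
begin

inductive ded :: "fm set \<Rightarrow> fm \<Rightarrow> bool" for G where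
  dhyp: "a \<in> G \<Longrightarrow> ded G a"
| dax: "prv a \<Longrightarrow> ded G a"
| dmp: "ded G (Imp a b) \<Longrightarrow> ded G a \<Longrightarrow> ded G b"

lemma prv_id: "prv (Imp a a)"
  using prv.mp[OF prv.mp[OF prv.ipc2[of a "Imp a a" a] prv.ipc1[of a "Imp a a"]] prv.ipc1[of a a]] .

lemma deduction: "ded (insert a G) b \<Longrightarrow> ded G (Imp a b)"
proof (induction rule: ded.induct)
  case (dhyp b)
  then show ?case
    by (metis ded.dmp ded.dhyp ded.dax insert_iff prv.ipc1 prv_id)
next
  case (dax b)
  then show ?case by (meson ded.dmp ded.dax prv.ipc1)
next
  case (dmp b c)
  then show ?case by (meson ded.dmp ded.dax prv.ipc2)
qed

lemma ded_mono: "ded G a \<Longrightarrow> G \<subseteq> H \<Longrightarrow> ded H a"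
  by (induction rule: ded.induct) (auto intro: ded.intros)

lemma ded_compact: "ded G a \<Longrightarrow> \<exists>F. finite F \<and> F \<subseteq> G \<and> ded F a"
proof (induction rule: ded.induct)
  case (dhyp a)
  then show ?case by (intro exI[of _ "{a}"]) (auto intro: ded.dhyp)
next
  case (dax a)
  then show ?case by (intro exI[of _ "{}"]) (auto intro: ded.dax)
next
  case (dmp a b)
  then obtain F1 F2 where "finite F1" "F1 \<subseteq> G" "ded F1 (Imp a b)" "finite F2" "F2 \<subseteq> G" "ded F2 a" by blast
  then show ?case
    by (intro exI[of _ "F1 \<union> F2"]) (auto intro: ded.dmp ded_mono)
qed

lemma ded_empty: "ded {} a \<Longrightarrow> prv a"
  by (induction rule: ded.induct) (auto intro: prv.mp)

lemma ded_cut: "ded G a \<Longrightarrow> ded (insert a G) b \<Longrightarrow> ded G b"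
  using deduction ded.dmp by blast

definition ptheory :: "fm set \<Rightarrow> bool" where
  "ptheory G \<longleftrightarrow> (\<forall>a. ded G a \<longrightarrow> a \<in> G) \<and> Bot \<notin> G \<and> (\<forall>a b. Or a b \<in> G \<longrightarrow> a \<in> G \<or> b \<in> G)"

lemma lindenbaum:
  assumes "\<not> ded G a"
  shows "\<exists>D. G \<subseteq> D \<and> ptheory D \<and> a \<notin> D"
proof -
  let ?A = "{D. G \<subseteq> D \<and> \<not> ded D a}"
  have "\<forall>C\<in>chains ?A. \<exists>U\<in>?A. \<forall>X\<in>C. X \<subseteq> U"
  proof
    fix C assume C: "C \<in> chains ?A"
    show "\<exists>U\<in>?A. \<forall>X\<in>C. X \<subseteq> U"
    proof (cases "C = {}")
      case True show ?thesis
        by (rule bexI[of _ G]) (use assms True in auto)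
    next
      case False
      have "\<not> ded (\<Union>C) a"
      proof
        assume "ded (\<Union>C) a"
        then obtain F where F: "finite F" "F \<subseteq> \<Union>C" "ded F a" using ded_compact by blast
        have "subset.chain ?A C" using C unfolding chains_alt_def by (rule CollectD)
        then obtain B where "B \<in> C" "F \<subseteq> B"
          by (rule finite_subset_Union_chain[OF F(1,2) False])
        moreover have "C \<subseteq> ?A" using C unfolding chains_def by simp
        ultimately have "\<not> ded B a" by auto
        moreover have "ded B a" using ded_mono[OF F(3) \<open>F \<subseteq> B\<close>] .
        ultimately show False by simp
      qed
      moreover obtain B0 where B0: "B0 \<in> C" using False by blast
      moreover have CA: "C \<subseteq> ?A" using C unfolding chains_def by simp
      have "G \<subseteq> B0" using B0 CA by auto
      then have "G \<subseteq> \<Union>C" using B0 by auto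
      ultimately have UA: "\<Union>C \<in> ?A" by simp
      show ?thesis by (rule bexI[OF _ UA]) auto
    qed
  qed
  then obtain M where M: "M \<in> ?A" and max: "\<forall>X\<in>?A. M \<subseteq> X \<longrightarrow> X = M"
    using Zorn_Lemma2[of ?A] by blast
  have ins: "\<not> ded (insert b M) a \<Longrightarrow> b \<in> M" for b
  proof -
    assume "\<not> ded (insert b M) a"
    then have "insert b M \<in> ?A" using M by auto
    then have "insert b M = M" using max by blast
    then show ?thesis by blast
  qed
  have cl: "\<forall>b. ded M b \<longrightarrow> b \<in> M"
  proof (intro allI impI)
    fix b assume "ded M b"
    then have "\<not> ded (insert b M) a" using ded_cut M by blast
    then show "b \<in> M" using ins by blast
  qed
  have bot: "Bot \<notin> M"
  proof
    assume "Bot \<in> M"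
    then have "ded M Bot" by (rule ded.dhyp)
    then have "ded M a" by (rule ded.dmp[OF ded.dax[OF prv.ipc9]])
    then show False using M by blast
  qed
  have pr: "\<forall>b c. Or b c \<in> M \<longrightarrow> b \<in> M \<or> c \<in> M"
  proof (intro allI impI)
    fix b c assume bc: "Or b c \<in> M"
    show "b \<in> M \<or> c \<in> M"
    proof (rule ccontr)
      assume "\<not> (b \<in> M \<or> c \<in> M)"
      then have "ded (insert b M) a" "ded (insert c M) a" using ins by blast+
      then have "ded M (Imp b a)" "ded M (Imp c a)" using deduction by blast+
      then have "ded M (Imp (Or b c) a)"
        using ded.dmp[OF ded.dmp[OF ded.dax[OF prv.ipc8[of b a c]]]] by blast
      then have "ded M a" by (rule ded.dmp[OF _ ded.dhyp[OF bc]])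
      then show False using M by blast
    qed
  qed
  have pt: "ptheory M" unfolding ptheory_def using cl bot pr by (intro conjI)
  have GM: "G \<subseteq> M" and nM: "\<not> ded M a" using M by auto
  have "a \<notin> M" using nM ded.dhyp by blast
  then show ?thesis using pt GM by blast
qed


lemma pt_prv: "ptheory G \<Longrightarrow> prv a \<Longrightarrow> a \<in> G"
  unfolding ptheory_def using ded.dax by blast

lemma pt_ded: "ptheory G \<Longrightarrow> ded G a \<Longrightarrow> a \<in> G"
  unfolding ptheory_def by blast

lemma pt_mp: "ptheory G \<Longrightarrow> Imp a b \<in> G \<Longrightarrow> a \<in> G \<Longrightarrow> b \<in> G"
  using pt_ded ded.dmp ded.dhyp by metis

lemma pt_prv_imp: "ptheory G \<Longrightarrow> prv (Imp a b) \<Longrightarrow> a \<in> G \<Longrightarrow> b \<in> G"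
  using pt_mp pt_prv by blast

lemma pt_bot: "ptheory G \<Longrightarrow> Bot \<notin> G"
  unfolding ptheory_def by blast

lemma pt_top: "ptheory G \<Longrightarrow> Top \<in> G"
  unfolding Top_def using pt_prv prv_id by blast

lemma pt_and: "ptheory G \<Longrightarrow> And a b \<in> G \<longleftrightarrow> a \<in> G \<and> b \<in> G"
proof
  assume G: "ptheory G"
  show "And a b \<in> G \<Longrightarrow> a \<in> G \<and> b \<in> G"
    using pt_prv_imp[OF G prv.ipc3] pt_prv_imp[OF G prv.ipc4] by blast
  show "a \<in> G \<and> b \<in> G \<Longrightarrow> And a b \<in> G"
    using pt_mp[OF G pt_prv_imp[OF G prv.ipc5]] by blast
qed

lemma pt_or: "ptheory G \<Longrightarrow> Or a b \<in> G \<longleftrightarrow> a \<in> G \<or> b \<in> G"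
proof
  assume G: "ptheory G"
  show "Or a b \<in> G \<Longrightarrow> a \<in> G \<or> b \<in> G"
    using G unfolding ptheory_def by blast
  show "a \<in> G \<or> b \<in> G \<Longrightarrow> Or a b \<in> G"
    using pt_prv_imp[OF G prv.ipc6] pt_prv_imp[OF G prv.ipc7] by blast
qed

lemma pt_imp_intro: "ptheory G \<Longrightarrow> b \<in> G \<Longrightarrow> Imp a b \<in> G"
  using pt_prv_imp prv.ipc1 by blast

lemma pt_imp_ext:
  assumes G: "ptheory G" and n: "Imp a b \<notin> G"
  shows "\<exists>D. G \<subseteq> D \<and> ptheory D \<and> a \<in> D \<and> b \<notin> D"
proof -
  have "\<not> ded (insert a G) b"
  proof
    assume "ded (insert a G) b"
    then have "ded G (Imp a b)" by (rule deduction)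
    then show False using n pt_ded[OF G] by blast
  qed
  then obtain D where "insert a G \<subseteq> D" "ptheory D" "b \<notin> D" using lindenbaum by blast
  then show ?thesis by blast
qed

lemma completeness: "(\<And>G. ptheory G \<Longrightarrow> a \<in> G) \<Longrightarrow> prv a"
proof (rule ccontr)
  assume h: "\<And>G. ptheory G \<Longrightarrow> a \<in> G" and "\<not> prv a"
  then have "\<not> ded {} a" using ded_empty by blast
  then obtain D where "ptheory D" "a \<notin> D" using lindenbaum by blast
  then show False using h by blast
qed

lemma completeness_imp: "(\<And>G. ptheory G \<Longrightarrow> a \<in> G \<Longrightarrow> b \<in> G) \<Longrightarrow> prv (Imp a b)"
proof (rule completeness)
  fix G assume h: "\<And>G. ptheory G \<Longrightarrow> a \<in> G \<Longrightarrow> b \<in> G" and G: "ptheory G"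
  show "Imp a b \<in> G"
  proof (rule ccontr)
    assume "Imp a b \<notin> G"
    then obtain D where "ptheory D" "a \<in> D" "b \<notin> D" using pt_imp_ext[OF G] by blast
    then show False using h by blast
  qed
qed

definition nx :: "fm set \<Rightarrow> fm set" where "nx G = {a. Nxt a \<in> G}"

lemma ded_nxt: "ded H a \<Longrightarrow> ded (Nxt ` H) (Nxt a)"
proof (induction rule: ded.induct)
  case (dhyp a) then show ?case by (simp add: ded.dhyp)
next
  case (dax a) then show ?case by (simp add: ded.dax prv.nec)
next
  case (dmp a b)
  have "ded (Nxt ` H) (Imp (Nxt a) (Nxt b))"
    by (rule ded.dmp[OF ded.dax[OF prv.nxt_imp] dmp.IH(1)])
  then show ?case using ded.dmp dmp.IH(2) by blast
qed

lemma pt_nx: assumes G: "ptheory G" shows "ptheory (nx G)"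
  unfolding ptheory_def
proof (intro conjI allI impI)
  fix a assume "ded (nx G) a"
  then have "ded (Nxt ` nx G) (Nxt a)" by (rule ded_nxt)
  then have "ded G (Nxt a)" by (rule ded_mono) (auto simp: nx_def)
  then show "a \<in> nx G" using pt_ded[OF G] by (simp add: nx_def)
next
  show "Bot \<notin> nx G" using pt_prv_imp[OF G prv.nxt_bot] pt_bot[OF G] by (auto simp: nx_def)
next
  fix a b assume "Or a b \<in> nx G"
  then have "Or (Nxt a) (Nxt b) \<in> G" using pt_prv_imp[OF G prv.nxt_or] by (auto simp: nx_def)
  then show "a \<in> nx G \<or> b \<in> nx G" using pt_or[OF G] by (auto simp: nx_def)
qed

lemma prv_dia_intro: "prv (Imp a (Dia a))"
  by (rule completeness_imp) (meson pt_or pt_prv_imp prv.dia_fix)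

lemma prv_dia_nxt: "prv (Imp (Nxt (Dia a)) (Dia a))"
  by (rule completeness_imp) (meson pt_or pt_prv_imp prv.dia_fix)

lemma prv_dia_elim: "prv (Imp (Dia a) (Or a (Nxt (Dia a))))"
proof -
  let ?p = "Or a (Nxt (Dia a))"
  have "prv (Imp (Nxt ?p) ?p)"
  proof (rule completeness_imp)
    fix G assume G: "ptheory G" and n: "Nxt ?p \<in> G"
    have N: "ptheory (nx G)" using pt_nx[OF G] .
    have "?p \<in> nx G" using n by (simp add: nx_def)
    then have "a \<in> nx G \<or> Nxt (Dia a) \<in> nx G" using pt_or[OF N] by blast
    then have "Dia a \<in> nx G" using pt_prv_imp[OF N prv_dia_intro] pt_prv_imp[OF N prv_dia_nxt] by blast
    then show "?p \<in> G" using pt_or[OF G] by (simp add: nx_def)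
  qed
  then have h1: "prv (Imp (Dia ?p) ?p)" by (rule prv.dia_ind)
  have h2: "prv (Imp (Dia a) (Dia ?p))" by (rule prv.dia_mono[OF prv.ipc6])
  show ?thesis
    by (rule completeness_imp) (meson pt_prv_imp h1 h2)
qed

lemma list_of_set: "finite S \<Longrightarrow> set (list_of S) = S"
  unfolding list_of_def using finite_distinct_list someI_ex[of "\<lambda>xs. set xs = S \<and> distinct xs"]
  by blast

lemma foldr_and: "ptheory G \<Longrightarrow> foldr And xs Top \<in> G \<longleftrightarrow> set xs \<subseteq> G"
  by (induction xs) (auto simp: pt_and pt_top)

lemma foldr_or: "ptheory G \<Longrightarrow> foldr Or xs Bot \<in> G \<longleftrightarrow> (\<exists>x\<in>set xs. x \<in> G)"
  by (induction xs) (auto simp: pt_or pt_bot)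

lemma BigAnd_mem: "ptheory G \<Longrightarrow> finite S \<Longrightarrow> BigAnd S \<in> G \<longleftrightarrow> S \<subseteq> G"
  unfolding BigAnd_def using foldr_and list_of_set by metis

lemma BigOr_mem: "ptheory G \<Longrightarrow> finite S \<Longrightarrow> BigOr S \<in> G \<longleftrightarrow> (\<exists>x\<in>S. x \<in> G)"
  unfolding BigOr_def using foldr_or list_of_set by metis


definition CC :: "tp set" where "CC = {(UNIV - G, G) | G. ptheory G}"

definition cmod :: "tp kframe" where
  "cmod = \<lparr>carrier = CC, le = (\<lambda>x y. x \<in> CC \<and> y \<in> CC \<and> snd x \<subseteq> snd y), lab = id,
           suc = (\<lambda>x y. x \<in> CC \<and> y = (UNIV - nx (snd x), nx (snd x)))\<rparr>"

lemma CC_iff: "x \<in> CC \<longleftrightarrow> ptheory (snd x) \<and> fst x = UNIV - snd x"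
  unfolding CC_def by (cases x) auto

lemma CC_mk: "ptheory G \<Longrightarrow> (UNIV - G, G) \<in> CC"
  by (simp add: CC_iff)

lemma cmod_simps: "carrier cmod = CC" "le cmod x y \<longleftrightarrow> x \<in> CC \<and> y \<in> CC \<and> snd x \<subseteq> snd y"
  "lab cmod x = x" "suc cmod x y \<longleftrightarrow> x \<in> CC \<and> y = (UNIV - nx (snd x), nx (snd x))"
  by (simp_all add: cmod_def)

lemma CC_type: assumes x: "x \<in> CC" shows "is_type UNIV x"
proof -
  have G: "ptheory (snd x)" and f: "fst x = UNIV - snd x" using x CC_iff by auto
  show ?thesis unfolding is_type_def f
  proof (intro conjI allI impI)
    show "Bot \<notin> snd x" using pt_bot[OF G] .
  next
    fix a b show "And a b \<in> snd x \<longleftrightarrow> a \<in> snd x \<and> b \<in> snd x" using pt_and[OF G] .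
  next
    fix a b show "Or a b \<in> snd x \<longleftrightarrow> a \<in> snd x \<or> b \<in> snd x" using pt_or[OF G] .
  next
    fix a b assume "Imp a b \<in> snd x"
    then show "a \<in> UNIV - snd x \<or> b \<in> snd x" using pt_mp[OF G] by blast
  next
    fix a assume "Dia a \<in> UNIV - snd x"
    then show "a \<in> UNIV - snd x" using pt_prv_imp[OF G prv_dia_intro] by blast
  qed auto
qed

lemma cmod_lf: "labelled_frame UNIV cmod"
proof -
  have h1: "\<forall>w\<in>carrier cmod. le cmod w w" by (simp add: cmod_simps)
  have h2: "\<forall>u\<in>carrier cmod. \<forall>v\<in>carrier cmod. \<forall>w\<in>carrier cmod. le cmod u v \<and> le cmod v w \<longrightarrow> le cmod u w"
    by (auto simp add: cmod_simps)
  have h3: "\<forall>u\<in>carrier cmod. \<forall>v\<in>carrier cmod. le cmod u v \<and> le cmod v u \<longrightarrow> u = v"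
  proof (intro ballI impI)
    fix u v assume "u \<in> carrier cmod" "v \<in> carrier cmod" "le cmod u v \<and> le cmod v u"
    then have "snd u = snd v" "fst u = UNIV - snd u" "fst v = UNIV - snd v"
      by (auto simp: cmod_simps CC_iff)
    then show "u = v" by (simp add: prod_eq_iff)
  qed
  have h4: "\<forall>u v. le cmod u v \<longrightarrow> u \<in> carrier cmod \<and> v \<in> carrier cmod" by (simp add: cmod_simps)
  have h5: "\<forall>w\<in>carrier cmod. is_type UNIV (lab cmod w)" by (simp add: cmod_simps CC_type)
  have h6: "\<forall>w\<in>carrier cmod. \<forall>v\<in>carrier cmod. le cmod w v \<longrightarrow> type_le (lab cmod w) (lab cmod v)"
    by (simp add: cmod_simps type_le_def)
  have h7: "\<forall>w\<in>carrier cmod. \<forall>a b. Imp a b \<in> fst (lab cmod w) \<longrightarrow>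
        (\<exists>v\<in>carrier cmod. le cmod w v \<and> a \<in> snd (lab cmod v) \<and> b \<in> fst (lab cmod v))"
  proof (intro ballI allI impI)
    fix w a b assume w: "w \<in> carrier cmod" and i: "Imp a b \<in> fst (lab cmod w)"
    then have w': "w \<in> CC" by (simp add: cmod_simps)
    then have G: "ptheory (snd w)" and n: "Imp a b \<notin> snd w" using i CC_iff by (auto simp: cmod_simps)
    obtain D where D: "snd w \<subseteq> D" "ptheory D" "a \<in> D" "b \<notin> D" using pt_imp_ext[OF G n] by blast
    show "\<exists>v\<in>carrier cmod. le cmod w v \<and> a \<in> snd (lab cmod v) \<and> b \<in> fst (lab cmod v)"
      by (rule bexI[of _ "(UNIV - D, D)"]) (use D w' CC_mk in \<open>auto simp: cmod_simps\<close>)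
  qed
  show ?thesis unfolding labelled_frame_def using h1 h2 h3 h4 h5 h6 h7 by (intro conjI) assumption+
qed

lemma cmod_wq: "weak_quasimodel UNIV cmod"
proof -
  have h1: "\<forall>w v. suc cmod w v \<longrightarrow> w \<in> carrier cmod \<and> v \<in> carrier cmod"
    by (auto simp: cmod_simps CC_iff pt_nx)
  have h2: "\<forall>w w' v. le cmod w w' \<and> suc cmod w v \<longrightarrow> (\<exists>v'. le cmod v v' \<and> suc cmod w' v')"
  proof (intro allI impI)
    fix w w' v assume h: "le cmod w w' \<and> suc cmod w v"
    then have a: "w \<in> CC" "w' \<in> CC" "snd w \<subseteq> snd w'" "v = (UNIV - nx (snd w), nx (snd w))"
      by (auto simp: cmod_simps)
    have "(UNIV - nx (snd w'), nx (snd w')) \<in> CC" using a CC_iff pt_nx by auto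
    moreover have "v \<in> CC" using a CC_iff pt_nx by auto
    moreover have "snd v \<subseteq> nx (snd w')" using a by (auto simp: nx_def)
    ultimately show "\<exists>v'. le cmod v v' \<and> suc cmod w' v'"
      using a by (auto simp: cmod_simps)
  qed
  have h3: "\<forall>w v. suc cmod w v \<longrightarrow> type_S (lab cmod w) (lab cmod v)"
  proof (intro allI impI)
    fix w v assume "suc cmod w v"
    then have h: "w \<in> CC" "v = (UNIV - nx (snd w), nx (snd w))" by (auto simp: cmod_simps)
    then have G: "ptheory (snd w)" and f: "fst w = UNIV - snd w" using CC_iff by auto
    show "type_S (lab cmod w) (lab cmod v)" unfolding type_S_def cmod_simps f
    proof (intro conjI allI impI)
      fix a assume "Dia a \<in> snd w \<and> a \<in> UNIV - snd w"
      then have "Or a (Nxt (Dia a)) \<in> snd w" "a \<notin> snd w" using pt_prv_imp[OF G prv_dia_elim] by auto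
      then have "Nxt (Dia a) \<in> snd w" using pt_or[OF G] by blast
      then show "Dia a \<in> snd v" using h by (simp add: nx_def)
    next
      fix a assume "Dia a \<in> UNIV - snd w"
      then have "Nxt (Dia a) \<notin> snd w" using pt_prv_imp[OF G prv_dia_nxt] by auto
      then show "Dia a \<in> fst v" using h by (simp add: nx_def)
    qed (use h in \<open>auto simp: nx_def\<close>)
  qed
  show ?thesis unfolding weak_quasimodel_def using cmod_lf h1 h2 h3 by (intro conjI) assumption+
qed

lemma cmod_det: "deterministic cmod"
  unfolding deterministic_def cmod_simps by auto



lemma lf_refl: "labelled_frame \<Sigma> I \<Longrightarrow> w \<in> carrier I \<Longrightarrow> le I w w"
  unfolding labelled_frame_def by (elim conjE) (drule bspec)

lemma lf_trans: "labelled_frame \<Sigma> I \<Longrightarrow> u \<in> carrier I \<Longrightarrow> v \<in> carrier I \<Longrightarrow> w \<in> carrier I \<Longrightarrow> le I u v \<Longrightarrow> le I v w \<Longrightarrow> le I u w"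
  unfolding labelled_frame_def by (elim conjE) (meson)

lemma lf_antisym: "labelled_frame \<Sigma> I \<Longrightarrow> u \<in> carrier I \<Longrightarrow> v \<in> carrier I \<Longrightarrow> le I u v \<Longrightarrow> le I v u \<Longrightarrow> u = v"
  unfolding labelled_frame_def by (elim conjE) (meson)

lemma lf_carrier: "labelled_frame \<Sigma> I \<Longrightarrow> le I u v \<Longrightarrow> u \<in> carrier I \<and> v \<in> carrier I"
  unfolding labelled_frame_def by (elim conjE) (meson)

lemma lf_type: "labelled_frame \<Sigma> I \<Longrightarrow> w \<in> carrier I \<Longrightarrow> is_type \<Sigma> (lab I w)"
  unfolding labelled_frame_def by (elim conjE) (meson)

definition upset :: "'a kframe \<Rightarrow> 'a \<Rightarrow> 'a set" where
  "upset I w = {v \<in> carrier I. le I w v}"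

definition SU :: "'a kframe \<Rightarrow> 'a \<Rightarrow> 'a set" where
  "SU I w = {v \<in> carrier I. le I w v \<and> v \<noteq> w}"

lemma SU_upset:
  assumes lf: "labelled_frame \<Sigma> I" and fin: "finite (carrier I)"
    and w: "w \<in> carrier I" and v: "v \<in> SU I w"
  shows "upset I v \<subset> upset I w" "w \<notin> upset I v" "card (upset I v) < card (upset I w)"
proof -
  have vw: "v \<in> carrier I" "le I w v" "v \<noteq> w" using v by (auto simp: SU_def)
  have tr: "\<And>u. u \<in> carrier I \<Longrightarrow> le I v u \<Longrightarrow> le I w u"
    using lf_trans[OF lf w vw(1)] vw(2) by blast
  have an: "\<not> le I v w" using lf_antisym[OF lf w vw(1) vw(2)] vw(3) by blast
  have rf: "le I w w" using lf_refl[OF lf w] .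
  show "w \<notin> upset I v" using an by (simp add: upset_def)
  show ps: "upset I v \<subset> upset I w" using tr an rf w by (auto simp: upset_def)
  have "finite (upset I w)" using fin by (simp add: upset_def)
  then show "card (upset I v) < card (upset I w)" using ps psubset_card_mono by blast
qed

lemma simf_stable:
  assumes lf: "labelled_frame \<Sigma> I" and fin: "finite (carrier I)"
  shows "w \<in> carrier I \<Longrightarrow> card (upset I w) \<le> n \<Longrightarrow> card (upset I w) \<le> m \<Longrightarrow> simf n I w = simf m I w"
proof (induction n arbitrary: w m)
  case 0
  have "w \<in> upset I w" using lf_refl[OF lf 0(1)] 0(1) unfolding upset_def by blast
  moreover have "finite (upset I w)" using fin by (simp add: upset_def)
  ultimately have "card (upset I w) > 0" by (auto simp: card_gt_0_iff)
  then show ?case using 0 by simp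
next
  case (Suc n)
  have "w \<in> upset I w" using lf_refl[OF lf Suc.prems(1)] Suc.prems(1) unfolding upset_def by blast
  moreover have "finite (upset I w)" using fin by (simp add: upset_def)
  ultimately have "card (upset I w) > 0" by (auto simp: card_gt_0_iff)
  then obtain m' where m: "m = Suc m'" using Suc.prems(3) by (cases m) auto
  have "simf n I v = simf m' I v" if v: "v \<in> SU I w" for v
  proof -
    have "card (upset I v) < card (upset I w)" using SU_upset[OF lf fin Suc.prems(1) v] by blast
    then show ?thesis using Suc.IH[of v m'] Suc.prems m v by (auto simp: SU_def)
  qed
  then have "simf n I ` SU I w = simf m' I ` SU I w" by (rule image_cong[OF refl])
  then show ?case using m by (simp add: SU_def)
qed

lemma Sim_unfold:
  assumes lf: "labelled_frame \<Sigma> I" and fin: "finite (carrier I)" and w: "w \<in> carrier I"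
  shows "Sim I w = Imp (BigAnd (snd (lab I w))) (Or (BigOr (fst (lab I w))) (BigOr (Sim I ` SU I w)))"
proof -
  obtain k where k: "card (carrier I) = Suc k" using w fin by (cases "card (carrier I)") auto
  have "simf k I v = Sim I v" if v: "v \<in> SU I w" for v
  proof -
    have vC: "v \<in> carrier I" using v by (simp add: SU_def)
    have "upset I v \<subseteq> carrier I - {w}" using SU_upset(2)[OF lf fin w v] by (auto simp: upset_def)
    then have "card (upset I v) \<le> card (carrier I - {w})" using fin by (simp add: card_mono)
    also have "\<dots> = k" using k w fin by simp
    finally have "card (upset I v) \<le> k" .
    then have "simf k I v = simf (Suc k) I v" using simf_stable[OF lf fin vC, of k "Suc k"] by linarith
    then show ?thesis unfolding Sim_def k .
  qed
  then have "simf k I ` SU I w = Sim I ` SU I w" by (rule image_cong[OF refl])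
  then show ?thesis unfolding Sim_def k by (simp add: SU_def)
qed

lemma lab_finite:
  assumes lf: "labelled_frame \<Sigma> I" and fS: "finite \<Sigma>" and w: "w \<in> carrier I"
  shows "finite (fst (lab I w))" "finite (snd (lab I w))"
proof -
  have "is_type \<Sigma> (lab I w)" using lf_type[OF lf w] .
  then have "fst (lab I w) \<subseteq> \<Sigma>" "snd (lab I w) \<subseteq> \<Sigma>" unfolding is_type_def by blast+
  then show "finite (fst (lab I w))" "finite (snd (lab I w))" using fS finite_subset by blast+
qed

lemma sim_sound:
  assumes lf: "labelled_frame \<Sigma> I" and fin: "finite (carrier I)" and fS: "finite \<Sigma>"
    and E: "simulation I cmod E"
  shows "E x y \<Longrightarrow> simf n I x \<notin> snd y"
proof (induction n arbitrary: x y)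
  case 0
  have "y \<in> CC" using E 0 unfolding simulation_def cmod_simps by blast
  then show ?case using pt_bot CC_iff by auto
next
  case (Suc n)
  have xC: "x \<in> carrier I" and yC: "y \<in> CC" using E Suc.prems unfolding simulation_def cmod_simps by blast+
  then have G: "ptheory (snd y)" using CC_iff by auto
  have ts: "type_sub (lab I x) y" using E Suc.prems unfolding simulation_def cmod_simps by blast
  have fSU: "finite (simf n I ` SU I x)" using fin by (simp add: SU_def)
  show ?case
  proof
    assume m: "simf (Suc n) I x \<in> snd y"
    have "BigAnd (snd (lab I x)) \<in> snd y"
      using ts BigAnd_mem[OF G lab_finite(2)[OF lf fS xC]] by (simp add: type_sub_def)
    then have "Or (BigOr (fst (lab I x))) (BigOr (simf n I ` SU I x)) \<in> snd y"
      using m pt_mp[OF G] by (simp add: SU_def)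
    then have "BigOr (fst (lab I x)) \<in> snd y \<or> BigOr (simf n I ` SU I x) \<in> snd y"
      using pt_or[OF G] by blast
    then show False
    proof
      assume "BigOr (fst (lab I x)) \<in> snd y"
      then obtain a where "a \<in> fst (lab I x)" "a \<in> snd y"
        using BigOr_mem[OF G lab_finite(1)[OF lf fS xC]] by blast
      moreover have "fst y = UNIV - snd y" using yC CC_iff by auto
      ultimately show False using ts by (auto simp: type_sub_def)
    next
      assume "BigOr (simf n I ` SU I x) \<in> snd y"
      then obtain v where v: "v \<in> SU I x" "simf n I v \<in> snd y"
        using BigOr_mem[OF G fSU] by blast
      then have "le I x v" by (simp add: SU_def)
      then obtain y' where y': "le cmod y y'" "E v y'" using E Suc.prems unfolding simulation_def by blast
      then have "snd y \<subseteq> snd y'" by (simp add: cmod_simps)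
      then have "simf n I v \<in> snd y'" using v by blast
      then show False using Suc.IH[OF y'(2)] by blast
    qed
  qed
qed

theorem lemma6p3:
  fixes \<Sigma> :: "fm set" and I :: "'a kframe"
  assumes "finite \<Sigma>" and "subfm_closed \<Sigma>"
    and "weak_quasimodel \<Sigma> I" and "finite (carrier I)"
    and "\<And>A :: tp kframe. weak_quasimodel UNIV A \<Longrightarrow> deterministic A \<Longrightarrow>
           simulation I A (simulates I A) \<and> dynamic_rel I A (simulates I A)
           \<and> surjective_rel I A (simulates I A)"
  defines "P \<equiv> {w \<in> carrier I. \<not> prv (Sim I w)}"
  shows "(\<forall>w\<in>P. \<forall>v\<in>carrier I. le I w v \<longrightarrow> v \<in> P)
       \<and> (\<forall>w\<in>P. \<exists>v\<in>P. suc I w v)"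
proof
  have wq: "weak_quasimodel \<Sigma> I" by fact
  then have lf: "labelled_frame \<Sigma> I" by (simp add: weak_quasimodel_def)
  have fin: "finite (carrier I)" and fS: "finite \<Sigma>" by fact+
  have fSU: "\<And>w. finite (Sim I ` SU I w)" using fin by (simp add: SU_def)
  show "\<forall>w\<in>P. \<forall>v\<in>carrier I. le I w v \<longrightarrow> v \<in> P"
  proof (intro ballI impI)
    fix w v assume wP: "w \<in> P" and vC: "v \<in> carrier I" and wv: "le I w v"
    show "v \<in> P"
    proof (rule ccontr)
      assume "v \<notin> P"
      then have pv: "prv (Sim I v)" using vC by (simp add: P_def)
      have wC: "w \<in> carrier I" and nw: "\<not> prv (Sim I w)" using wP by (auto simp: P_def)
      then have "v \<noteq> w" using pv by blast
      then have vS: "v \<in> SU I w" using vC wv by (simp add: SU_def)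
      have "prv (Sim I w)"
      proof (rule completeness)
        fix G assume G: "ptheory G"
        have "Sim I v \<in> G" using pt_prv[OF G pv] .
        then have "BigOr (Sim I ` SU I w) \<in> G" using BigOr_mem[OF G fSU] vS by blast
        then have "Or (BigOr (fst (lab I w))) (BigOr (Sim I ` SU I w)) \<in> G" using pt_or[OF G] by blast
        then show "Sim I w \<in> G" using pt_imp_intro[OF G] Sim_unfold[OF lf fin wC] by simp
      qed
      then show False using nw by blast
    qed
  qed
  show "\<forall>w\<in>P. \<exists>v\<in>P. suc I w v"
  proof
    fix w assume wP: "w \<in> P"
    have wC: "w \<in> carrier I" and nw: "\<not> prv (Sim I w)" using wP by (auto simp: P_def)
    define E where "E = (\<lambda>x y. x \<in> carrier I \<and> y \<in> CC \<and> snd (lab I x) \<subseteq> snd y \<and>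
        fst (lab I x) \<inter> snd y = {} \<and> (\<forall>v\<in>SU I x. Sim I v \<notin> snd y))"
    have ext: "\<exists>D. G \<subseteq> D \<and> E x (UNIV - D, D)" if xC: "x \<in> carrier I" and G: "ptheory G" and n: "Sim I x \<notin> G" for x G
    proof -
      have "Imp (BigAnd (snd (lab I x))) (Or (BigOr (fst (lab I x))) (BigOr (Sim I ` SU I x))) \<notin> G"
        using n Sim_unfold[OF lf fin xC] by simp
      then obtain D where D: "G \<subseteq> D" "ptheory D" "BigAnd (snd (lab I x)) \<in> D"
          "Or (BigOr (fst (lab I x))) (BigOr (Sim I ` SU I x)) \<notin> D"
        using pt_imp_ext[OF G] by blast
      have a: "snd (lab I x) \<subseteq> D" using D(3) BigAnd_mem[OF D(2) lab_finite(2)[OF lf fS xC]] by blast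
      have b: "BigOr (fst (lab I x)) \<notin> D" "BigOr (Sim I ` SU I x) \<notin> D" using D(4) pt_or[OF D(2)] by blast+
      have c: "fst (lab I x) \<inter> D = {}" using b(1) BigOr_mem[OF D(2) lab_finite(1)[OF lf fS xC]] by blast
      have d: "\<forall>v\<in>SU I x. Sim I v \<notin> D" using b(2) BigOr_mem[OF D(2) fSU] by blast
      have "E x (UNIV - D, D)" unfolding E_def using xC CC_mk[OF D(2)] a c d by simp
      then show ?thesis using D(1) by blast
    qed
    have simE: "simulation I cmod E"
      unfolding simulation_def
    proof (intro conjI allI impI)
      fix x y assume "E x y" then show "x \<in> carrier I" by (simp add: E_def)
    next
      fix x y assume "E x y" then show "y \<in> carrier cmod" by (simp add: E_def cmod_simps)
    next
      fix x y assume "E x y" then show "type_sub (lab I x) (lab cmod y)"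
        by (auto simp: E_def cmod_simps type_sub_def CC_iff)
    next
      fix x y x' assume h: "E x y \<and> le I x x'"
      then have xC: "x \<in> carrier I" and yC: "y \<in> CC" and xx: "le I x x'" by (auto simp: E_def)
      have x'C: "x' \<in> carrier I" using lf_carrier[OF lf xx] by blast
      show "\<exists>y'. le cmod y y' \<and> E x' y'"
      proof (cases "x' = x")
        case True
        have "le cmod y y" using yC by (simp add: cmod_simps)
        then show ?thesis using h True by blast
      next
        case False
        then have "x' \<in> SU I x" using x'C xx by (simp add: SU_def)
        then have "Sim I x' \<notin> snd y" using h by (simp add: E_def)
        moreover have "ptheory (snd y)" using yC CC_iff by auto
        ultimately obtain D where D: "snd y \<subseteq> D" "E x' (UNIV - D, D)" using ext[OF x'C] by blast
        then have "(UNIV - D, D) \<in> CC" by (simp add: E_def)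
        then have "le cmod y (UNIV - D, D)" using D yC by (simp add: cmod_simps)
        then show ?thesis using D by blast
      qed
    qed
    have "\<not> ded {} (Sim I w)" using nw ded_empty by blast
    then obtain G0 where G0: "ptheory G0" "Sim I w \<notin> G0" using lindenbaum by blast
    then obtain D where D: "E w (UNIV - D, D)" using ext[OF wC] by blast
    let ?y0 = "(UNIV - D, D)"
    have y0: "?y0 \<in> CC" using D by (simp add: E_def)
    then have DG: "ptheory D" using CC_iff by auto
    have sim0: "simulates I cmod w ?y0" unfolding simulates_def using simE D by blast
    have dyn: "dynamic_rel I cmod (simulates I cmod)" using assms(5)[OF cmod_wq cmod_det] by blast
    have "suc cmod ?y0 (UNIV - nx D, nx D)" using y0 by (simp add: cmod_simps)
    then obtain x' where x': "suc I w x'" "simulates I cmod x' (UNIV - nx D, nx D)"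
      using dyn sim0 unfolding dynamic_rel_def by blast
    have x'C: "x' \<in> carrier I" using wq x'(1) unfolding weak_quasimodel_def by blast
    obtain E' where E': "simulation I cmod E'" "E' x' (UNIV - nx D, nx D)"
      using x'(2) unfolding simulates_def by blast
    have "Sim I x' \<notin> nx D" using sim_sound[OF lf fin fS E'(1) E'(2)] by (simp add: Sim_def)
    then have "\<not> prv (Sim I x')" using pt_prv[OF pt_nx[OF DG]] by blast
    then have "x' \<in> P" using x'C by (simp add: P_def)
    then show "\<exists>v\<in>P. suc I w v" using x'(1) by blast
  qed
qed

end
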